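(* Let $A=(a_i^j)$ and $B=(b_i^j)$ be $n\times n$ matrices with all entries in $\{0,1\}$, such that for some $r\in\{1,\dots,n-1\}$, $a_i^j=b_i^j=0$ whenever $j-i\ne r$. Let $\xi>0$. If there exists an invertible matrix $C$ with $\|C\|,\|C^{-1}\|\le\xi$ and $\|AC-CB\|=\varepsilon<\frac{1}{n!\,\xi^n}$, then $\mathrm{rank}\,A=\mathrm{rank}\,B$.
   Context: $\|\cdot\|$ is the operator norm on $n\times n$ complex matrices; $a_i^j$ is the entry in row $i$, column $j$. *)

theory Defs
  imports "Jordan_Normal_Form.DL_Rank" Complex_Main
begin

definition vec_l2_norm :: "complex vec \<Rightarrow> real" where
  "vec_l2_norm v = sqrt (\<Sum>i<dim_vec v. (cmod (v $ i))^2)"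

definition op_norm :: "complex mat \<Rightarrow> real" where
  "op_norm M = Sup {vec_l2_norm (M *\<^sub>v v) | v. v \<in> carrier_vec (dim_col M) \<and> vec_l2_norm v \<le> 1}"

end

theory Submission
  imports Defs
begin


context vec_space begin

lemma mv_in_span:
  assumes Y: "Y \<in> carrier_mat n nc" and x: "x \<in> carrier_vec nc"
  shows "Y *\<^sub>v x \<in> span (set (cols Y))"
proof -
  have cs: "set (cols Y) \<subseteq> carrier_vec n" using Y cols_dim by blast
  have "\<forall>w \<in> set (cols Y). dim_vec w = n" using cs by auto
  hence "lincomb_list (\<lambda>i. x $ i) (cols Y) = mat_of_cols n (cols Y) *\<^sub>v vec (length (cols Y)) (\<lambda>i. x $ i)"
    by (rule lincomb_list_as_mat_mult)
  also have "mat_of_cols n (cols Y) = Y" using Y mat_of_cols_cols[of Y] by auto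
  also have "vec (length (cols Y)) (\<lambda>i. x $ i) = x" using Y x by auto
  finally have "Y *\<^sub>v x = lincomb_list (\<lambda>i. x $ i) (cols Y)" by simp
  also have "\<dots> \<in> span_list (cols Y)" by (intro in_span_listI) auto
  also have "span_list (cols Y) = span (set (cols Y))" by (rule span_list_as_span[OF cs])
  finally show ?thesis .
qed

lemma li_in_span_le_rank:
  assumes Y: "Y \<in> carrier_mat n nc" and U: "U \<subseteq> span (set (cols Y))" and li: "lin_indpt U"
  shows "card U \<le> rank Y"
proof -
  let ?S = "set (cols Y)"
  have cs: "?S \<subseteq> carrier_vec n" using Y cols_dim by blast
  have vs: "vectorspace class_ring (vs (span ?S))"
    using cs span_is_subspace subspace_def subspace_is_vs by simp
  have fd: "vectorspace.fin_dim class_ring (vs (span ?S))" by (rule fin_dim_span_cols[OF Y])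
  have li2: "LinearCombinations.module.lin_indpt class_ring (vs (span ?S)) U"
    using span_li_not_depend(2)[OF U span_is_submodule[OF cs]] li by simp
  have "U \<subseteq> carrier (vs (span ?S))" using U by simp
  from vectorspace.li_le_dim(2)[OF vs fd this li2]
  show ?thesis unfolding rank_def by simp
qed


lemma kernel_exists:
  assumes N: "N \<in> carrier_mat n m" and Y: "Y \<in> carrier_mat n nc"
    and sub: "set (cols N) \<subseteq> span (set (cols Y))" and lt: "rank Y < m"
  shows "\<exists>c. c \<in> carrier_vec m \<and> c \<noteq> 0\<^sub>v m \<and> N *\<^sub>v c = 0\<^sub>v n"
proof (cases "distinct (cols N)")
  case True
  show ?thesis
  proof (cases "lin_indpt (set (cols N))")
    case True2: True
    have "card (set (cols N)) = m" using distinct_card[OF True] N by simp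
    moreover have "card (set (cols N)) \<le> rank Y" by (rule li_in_span_le_rank[OF Y sub True2])
    ultimately show ?thesis using lt by simp
  next
    case False
    then obtain v where "v \<in> carrier_vec m" "v \<noteq> 0\<^sub>v m" "N *\<^sub>v v = 0\<^sub>v n"
      using lin_depE[OF N _ True] by blast
    then show ?thesis by blast
  qed
next
  case False
  then obtain i j where ij: "i < m" "j < m" "i \<noteq> j" "cols N ! i = cols N ! j"
    using N by (auto simp: distinct_conv_nth)
  hence colij: "col N i = col N j" using N by simp
  define c :: "'a vec" where "c = unit_vec m i - unit_vec m j"
  have cc: "c \<in> carrier_vec m" unfolding c_def by simp
  have "c $ i = 1" unfolding c_def using ij by simp
  hence "c \<noteq> 0\<^sub>v m" using ij(1) by auto
  moreover have "N *\<^sub>v c = 0\<^sub>v n"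
  proof (rule eq_vecI)
    fix k assume "k < dim_vec (0\<^sub>v n :: 'a vec)"
    hence k: "k < n" by simp
    have "(N *\<^sub>v c) $ k = row N k \<bullet> c" using N k by simp
    also have "\<dots> = row N k \<bullet> unit_vec m i - row N k \<bullet> unit_vec m j"
      unfolding c_def by (rule scalar_prod_minus_distrib[of _ m]) (use N k in auto)
    also have "\<dots> = N $$ (k, i) - N $$ (k, j)" using N k ij by simp
    also have "N $$ (k, i) = N $$ (k, j)"
    proof -
      have "col N i $ k = col N j $ k" using colij by simp
      thus ?thesis using N k ij by simp
    qed
    finally show "(N *\<^sub>v c) $ k = 0\<^sub>v n $ k" using k by simp
  qed (use N in simp)
  ultimately show ?thesis using cc by blast
qed

lemma rank_le_nonzero_cols:
  assumes K: "K \<in> carrier_mat n nc"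
  shows "rank K \<le> card {j. j < nc \<and> col K j \<noteq> 0\<^sub>v n}"
proof -
  obtain U where U: "maximal U (\<lambda>T. T \<subseteq> set (cols K) \<and> lin_indpt T)"
    using maximal_exists[of "(\<lambda>T. T \<subseteq> set (cols K) \<and> lin_indpt T)" "card (set (cols K))" "{}"]
    by (meson List.finite_set card_mono empty_iff empty_subsetI finite_lin_indpt2 rev_finite_subset)
  have r: "rank K = card U" by (rule rank_card_indpt[OF K U])
  have Us: "U \<subseteq> set (cols K)" and li: "lin_indpt U" using U unfolding maximal_def by auto
  have cs: "set (cols K) \<subseteq> carrier_vec n" using K cols_dim by blast
  have z: "0\<^sub>v n \<notin> U" using vs_zero_lin_dep[of U] Us cs li by auto
  have "U \<subseteq> (\<lambda>j. col K j) ` {j. j < nc \<and> col K j \<noteq> 0\<^sub>v n}"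
  proof
    fix u assume u: "u \<in> U"
    then obtain j where j: "j < length (cols K)" "u = cols K ! j" using Us by (metis in_set_conv_nth subsetD)
    hence "j < nc" "u = col K j" using K by auto
    thus "u \<in> (\<lambda>j. col K j) ` {j. j < nc \<and> col K j \<noteq> 0\<^sub>v n}" using z u by auto
  qed
  hence "card U \<le> card ((\<lambda>j. col K j) ` {j. j < nc \<and> col K j \<noteq> 0\<^sub>v n})"
    by (rule card_mono[rotated]) auto
  also have "\<dots> \<le> card {j. j < nc \<and> col K j \<noteq> 0\<^sub>v n}" by (rule card_image_le) auto
  finally show ?thesis using r by simp
qed

end


lemma sum_shift_r:
  fixes g :: "nat \<Rightarrow> real"
  assumes "r \<le> n" and z: "\<And>j. j < r \<Longrightarrow> g j = 0"
  shows "(\<Sum>i<n. if i + r < n then g (i + r) else 0) = (\<Sum>j<n. g j)"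
proof -
  have "(\<Sum>i<n. if i + r < n then g (i + r) else 0) = (\<Sum>i\<in>{0..<n-r}. g (i + r))"
    by (rule sum.mono_neutral_cong_right) (use assms in auto)
  also have "\<dots> = (\<Sum>j\<in>{0+r..<n-r+r}. g j)" by (rule sum.shift_bounds_nat_ivl[symmetric])
  also have "\<dots> = (\<Sum>j\<in>{r..<n}. g j)" using assms by simp
  also have "\<dots> = (\<Sum>j<n. g j)"
    by (rule sum.mono_neutral_left) (use assms in auto)
  finally show ?thesis .
qed

lemma core:
  fixes K Y X :: "complex mat" and n r :: nat
  assumes K: "K \<in> carrier_mat n n" and Y: "Y \<in> carrier_mat n n" and X: "X \<in> carrier_mat n n"
    and K01: "\<forall>i<n. \<forall>j<n. K $$ (i, j) \<in> {0, 1}"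
    and supp: "\<forall>i<n. \<forall>j<n. int j - int i \<noteq> int r \<longrightarrow> K $$ (i, j) = 0"
    and rk: "vec_space.rank n Y < vec_space.rank n K"
  shows "\<exists>w \<in> carrier_vec n. w \<noteq> 0\<^sub>v n \<and> Y *\<^sub>v (X *\<^sub>v w) = 0\<^sub>v n
           \<and> vec_l2_norm (K *\<^sub>v w) = vec_l2_norm w"
proof -
  interpret VS: vec_space "TYPE(complex)" n .
  define S where "S = {j. j < n \<and> col K j \<noteq> 0\<^sub>v n}"
  define m where "m = card S"
  define js where "js = sorted_list_of_set S"
  have finS: "finite S" unfolding S_def by simp
  have jsd: "distinct js" and jsl: "length js = m" and jss: "set js = S"
    unfolding js_def m_def using finS by auto
  have Sn: "\<And>l. l < m \<Longrightarrow> js ! l < n" using jss jsl unfolding S_def by (metis (mono_tags) mem_Collect_eq nth_mem)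
  have rkm: "vec_space.rank n K \<le> m" unfolding m_def S_def by (rule VS.rank_le_nonzero_cols[OF K])
  define P :: "complex mat" where "P = mat n m (\<lambda>(i, l). if i = js ! l then 1 else 0)"
  have P: "P \<in> carrier_mat n m" unfolding P_def by simp
  define N where "N = Y * (X * P)"
  have N: "N \<in> carrier_mat n m" unfolding N_def using Y X P by auto
  have sub: "set (cols N) \<subseteq> VS.span (set (cols Y))"
  proof
    fix v assume "v \<in> set (cols N)"
    then obtain l where l: "l < m" "v = col N l" using N by (metis cols_length cols_nth in_set_conv_nth carrier_matD(2))
    have "v = Y *\<^sub>v col (X * P) l" unfolding l N_def using Y X P l
      by (intro col_mult2[of _ n n]) (use Y X P in auto)
    moreover have "col (X * P) l \<in> carrier_vec n" using X P by (simp add: carrier_vecI)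
    ultimately show "v \<in> VS.span (set (cols Y))" using VS.mv_in_span[OF Y] by simp
  qed
  obtain c where c: "c \<in> carrier_vec m" "c \<noteq> 0\<^sub>v m" "N *\<^sub>v c = 0\<^sub>v n"
    using VS.kernel_exists[OF N Y sub] rk rkm by fastforce
  define w where "w = P *\<^sub>v c"
  have w: "w \<in> carrier_vec n" unfolding w_def using P c by simp
  have wjs: "w $ (js ! l) = c $ l" if l: "l < m" for l
  proof -
    have "w $ (js ! l) = (\<Sum>l'<m. (if js ! l = js ! l' then 1 else 0) * c $ l')"
      unfolding w_def P_def using Sn[OF l] c(1) l
      by (simp add: mult_mat_vec_def scalar_prod_def row_def lessThan_atLeast0)
    also have "\<dots> = (\<Sum>l'<m. if l' = l then c $ l' else 0)"
      by (rule sum.cong) (use jsd jsl l in \<open>auto simp: nth_eq_iff_index_eq\<close>)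
    also have "\<dots> = c $ l" using l by simp
    finally show ?thesis .
  qed
  have wS: "w $ j = 0" if j: "j < n" "j \<notin> S" for j
  proof -
    have "w $ j = (\<Sum>l'<m. (if j = js ! l' then 1 else 0) * c $ l')"
      unfolding w_def P_def using j c(1)
      by (simp add: mult_mat_vec_def scalar_prod_def row_def lessThan_atLeast0)
    also have "\<dots> = 0"
      by (rule sum.neutral) (use jss jsl j in auto)
    finally show ?thesis .
  qed
  have wne: "w \<noteq> 0\<^sub>v n"
  proof
    assume w0: "w = 0\<^sub>v n"
    have "c = 0\<^sub>v m"
    proof (rule eq_vecI)
      fix l assume "l < dim_vec (0\<^sub>v m :: complex vec)"
      hence l: "l < m" by simp
      show "c $ l = 0\<^sub>v m $ l" using wjs[OF l] w0 Sn[OF l] l by simp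
    qed (use c in simp)
    with c(2) show False by simp
  qed
  have "Y *\<^sub>v (X *\<^sub>v w) = N *\<^sub>v c"
    unfolding w_def N_def
    using assoc_mult_mat_vec[of Y n n "X * P" m c] assoc_mult_mat_vec[of X n n P m c] Y X P c(1) by simp
  hence YX: "Y *\<^sub>v (X *\<^sub>v w) = 0\<^sub>v n" using c(3) by simp
  have Kent: "K $$ (i, j) * w $ j = (if j = i + r then w $ j else 0)" if ij: "i < n" "j < n" for i j
  proof (cases "j = i + r")
    case False
    hence "int j - int i \<noteq> int r" by simp
    thus ?thesis using supp ij False by simp
  next
    case jr: True
    show ?thesis
    proof (cases "j \<in> S")
      case False
      hence "w $ j = 0" using wS ij by simp
      thus ?thesis using jr by simp
    next
      case jS: True
      then obtain i' where i': "i' < n" "col K j $ i' \<noteq> 0\<^sub>v n $ i'"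
        unfolding S_def by (metis (mono_tags) K carrier_matD(1) dim_col eq_vecI index_zero_vec(2) mem_Collect_eq)
      hence "K $$ (i', j) \<noteq> 0" using K ij by simp
      hence "int j - int i' = int r" using supp i' ij by blast
      hence "i' = i" using jr by simp
      hence "K $$ (i, j) = 1" using \<open>K $$ (i', j) \<noteq> 0\<close> K01 ij by auto
      thus ?thesis using jr by simp
    qed
  qed
  have Kw: "(K *\<^sub>v w) $ i = (if i + r < n then w $ (i + r) else 0)" if i: "i < n" for i
  proof -
    have "(K *\<^sub>v w) $ i = (\<Sum>j<n. K $$ (i, j) * w $ j)"
      using K w i by (simp add: mult_mat_vec_def scalar_prod_def row_def lessThan_atLeast0)
    also have "\<dots> = (\<Sum>j<n. if j = i + r then w $ j else 0)"
      by (rule sum.cong) (use Kent i in auto)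
    also have "\<dots> = (if i + r < n then w $ (i + r) else 0)" by simp
    finally show ?thesis .
  qed
  have rn: "r \<le> n"
  proof (rule ccontr)
    assume "\<not> r \<le> n"
    have "S = {}"
    proof (rule ccontr)
      assume "S \<noteq> {}"
      then obtain j where jS: "j \<in> S" by blast
      then obtain i' where i': "i' < n" "col K j $ i' \<noteq> 0\<^sub>v n $ i'" and j: "j < n"
        unfolding S_def by (metis (mono_tags) K carrier_matD(1) dim_col eq_vecI index_zero_vec(2) mem_Collect_eq)
      hence "K $$ (i', j) \<noteq> 0" using K by simp
      hence "int j - int i' = int r" using supp i' j by blast
      thus False using \<open>\<not> r \<le> n\<close> j by simp
    qed
    hence "m = 0" unfolding m_def by simp
    thus False using rk rkm by simp
  qed
  have w0r: "w $ j = 0" if j: "j < r" "j < n" for j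
  proof -
    have "j \<notin> S"
    proof
      assume "j \<in> S"
      then obtain i' where i': "i' < n" "col K j $ i' \<noteq> 0\<^sub>v n $ i'"
        unfolding S_def by (metis (mono_tags) K carrier_matD(1) dim_col eq_vecI index_zero_vec(2) mem_Collect_eq)
      hence "K $$ (i', j) \<noteq> 0" using K j by simp
      hence "int j - int i' = int r" using supp i' j by blast
      thus False using j by simp
    qed
    thus ?thesis using wS j by simp
  qed
  have "(\<Sum>i<dim_vec (K *\<^sub>v w). (cmod ((K *\<^sub>v w) $ i))\<^sup>2)
        = (\<Sum>i<n. if i + r < n then (cmod (w $ (i + r)))\<^sup>2 else 0)"
  proof (rule sum.cong)
    show "{..<dim_vec (K *\<^sub>v w)} = {..<n}" using K by simp
  next
    fix i assume "i \<in> {..<n}"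
    thus "(cmod ((K *\<^sub>v w) $ i))\<^sup>2 = (if i + r < n then (cmod (w $ (i + r)))\<^sup>2 else 0)"
      using Kw[of i] by simp
  qed
  also have "\<dots> = (\<Sum>j<n. (cmod (w $ j))\<^sup>2)"
    by (rule sum_shift_r[OF rn]) (use w0r rn in auto)
  finally have "vec_l2_norm (K *\<^sub>v w) = vec_l2_norm w"
    unfolding vec_l2_norm_def using w by simp
  thus ?thesis using w wne YX by blast
qed



lemma vnorm_nonneg: "vec_l2_norm v \<ge> 0"
  unfolding vec_l2_norm_def by (simp add: sum_nonneg)

lemma vnorm_zero: assumes "vec_l2_norm v = 0" shows "v = 0\<^sub>v (dim_vec v)"
proof (rule eq_vecI)
  fix i assume "i < dim_vec (0\<^sub>v (dim_vec v) :: complex vec)"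
  hence i: "i < dim_vec v" by simp
  have "(\<Sum>i<dim_vec v. (cmod (v $ i))\<^sup>2) = 0" using assms unfolding vec_l2_norm_def by simp
  hence "\<forall>i\<in>{..<dim_vec v}. (cmod (v $ i))\<^sup>2 = 0" by (subst (asm) sum_nonneg_eq_0_iff) auto
  thus "v $ i = 0\<^sub>v (dim_vec v) $ i" using i by simp
qed simp

lemma vnorm_smult: "vec_l2_norm (a \<cdot>\<^sub>v v) = cmod a * vec_l2_norm v"
proof -
  have "(\<Sum>i<dim_vec v. (cmod ((a \<cdot>\<^sub>v v) $ i))\<^sup>2) = (cmod a)\<^sup>2 * (\<Sum>i<dim_vec v. (cmod (v $ i))\<^sup>2)"
    by (simp add: sum_distrib_left norm_mult power_mult_distrib)
  thus ?thesis unfolding vec_l2_norm_def by (simp add: real_sqrt_mult)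
qed

lemma vnorm_neg: assumes "x \<in> carrier_vec n" shows "vec_l2_norm (0\<^sub>v n - x) = vec_l2_norm x"
  unfolding vec_l2_norm_def using assms by simp

lemma vnorm_entry: assumes "j < dim_vec v" shows "cmod (v $ j) \<le> vec_l2_norm v"
proof -
  have "(cmod (v $ j))\<^sup>2 \<le> (\<Sum>i<dim_vec v. (cmod (v $ i))\<^sup>2)"
    by (rule member_le_sum) (use assms in auto)
  hence "sqrt ((cmod (v $ j))\<^sup>2) \<le> vec_l2_norm v" unfolding vec_l2_norm_def by (rule real_sqrt_le_mono)
  thus ?thesis by simp
qed

lemma sq_sum_le: fixes f :: "nat \<Rightarrow> real"
  assumes "finite A" "\<And>i. i \<in> A \<Longrightarrow> f i \<ge> 0" shows "(\<Sum>i\<in>A. (f i)\<^sup>2) \<le> (\<Sum>i\<in>A. f i)\<^sup>2"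
  using assms
proof (induction A rule: finite_induct)
  case (insert a A)
  have s: "(\<Sum>i\<in>A. f i) \<ge> 0" using insert by (simp add: sum_nonneg)
  have "(\<Sum>i\<in>insert a A. (f i)\<^sup>2) = (f a)\<^sup>2 + (\<Sum>i\<in>A. (f i)\<^sup>2)" using insert by simp
  also have "\<dots> \<le> (f a)\<^sup>2 + (\<Sum>i\<in>A. f i)\<^sup>2" using insert by simp
  also have "\<dots> \<le> (f a + (\<Sum>i\<in>A. f i))\<^sup>2" using s insert(4)[of a] by (simp add: power2_sum)
  also have "\<dots> = (\<Sum>i\<in>insert a A. f i)\<^sup>2" using insert by simp
  finally show ?case .
qed simp

lemma vnorm_le_l1: "vec_l2_norm v \<le> (\<Sum>i<dim_vec v. cmod (v $ i))"
proof -
  have "vec_l2_norm v \<le> sqrt ((\<Sum>i<dim_vec v. cmod (v $ i))\<^sup>2)"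
    unfolding vec_l2_norm_def by (rule real_sqrt_le_mono, rule sq_sum_le) auto
  also have "\<dots> = (\<Sum>i<dim_vec v. cmod (v $ i))" by (simp add: sum_nonneg)
  finally show ?thesis .
qed

definition l1m :: "complex mat \<Rightarrow> real" where
  "l1m M = (\<Sum>i<dim_row M. \<Sum>j<dim_col M. cmod (M $$ (i, j)))"

lemma mv_bound: assumes v: "v \<in> carrier_vec (dim_col M)"
  shows "vec_l2_norm (M *\<^sub>v v) \<le> l1m M * vec_l2_norm v"
proof -
  have e: "cmod ((M *\<^sub>v v) $ i) \<le> (\<Sum>j<dim_col M. cmod (M $$ (i, j))) * vec_l2_norm v" if i: "i < dim_row M" for i
  proof -
    have "(M *\<^sub>v v) $ i = (\<Sum>j<dim_col M. M $$ (i, j) * v $ j)"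
      using i v by (simp add: mult_mat_vec_def scalar_prod_def row_def lessThan_atLeast0)
    hence "cmod ((M *\<^sub>v v) $ i) \<le> (\<Sum>j<dim_col M. cmod (M $$ (i, j) * v $ j))"
      by (simp add: norm_sum)
    also have "\<dots> \<le> (\<Sum>j<dim_col M. cmod (M $$ (i, j)) * vec_l2_norm v)"
      by (rule sum_mono) (use v vnorm_entry in \<open>auto simp: norm_mult intro: mult_left_mono\<close>)
    finally show ?thesis by (simp add: sum_distrib_right)
  qed
  have "vec_l2_norm (M *\<^sub>v v) \<le> (\<Sum>i<dim_row M. cmod ((M *\<^sub>v v) $ i))"
    using vnorm_le_l1[of "M *\<^sub>v v"] by simp
  also have "\<dots> \<le> (\<Sum>i<dim_row M. (\<Sum>j<dim_col M. cmod (M $$ (i, j))) * vec_l2_norm v)"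
    by (rule sum_mono) (use e in auto)
  also have "\<dots> = l1m M * vec_l2_norm v" unfolding l1m_def by (simp add: sum_distrib_right)
  finally show ?thesis .
qed

lemma opn_bdd: "bdd_above {vec_l2_norm (M *\<^sub>v v) | v. v \<in> carrier_vec (dim_col M) \<and> vec_l2_norm v \<le> 1}"
proof (rule bdd_aboveI[of _ "l1m M"])
  fix x assume "x \<in> {vec_l2_norm (M *\<^sub>v v) | v. v \<in> carrier_vec (dim_col M) \<and> vec_l2_norm v \<le> 1}"
  then obtain v where v: "v \<in> carrier_vec (dim_col M)" "vec_l2_norm v \<le> 1" "x = vec_l2_norm (M *\<^sub>v v)" by blast
  have "l1m M \<ge> 0" unfolding l1m_def by (simp add: sum_nonneg)
  hence "l1m M * vec_l2_norm v \<le> l1m M" using v(2) by (simp add: mult_left_le)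
  thus "x \<le> l1m M" using mv_bound[OF v(1)] v(3) by simp
qed

lemma opn_upper: assumes "v \<in> carrier_vec (dim_col M)" "vec_l2_norm v \<le> 1"
  shows "vec_l2_norm (M *\<^sub>v v) \<le> op_norm M"
  unfolding op_norm_def by (rule cSup_upper[OF _ opn_bdd]) (use assms in blast)

lemma opn: assumes M: "M \<in> carrier_mat n n" and v: "v \<in> carrier_vec n"
  shows "vec_l2_norm (M *\<^sub>v v) \<le> op_norm M * vec_l2_norm v"
proof (cases "vec_l2_norm v = 0")
  case True
  hence v0: "v = 0\<^sub>v n" using vnorm_zero[of v] v by simp
  have "vec_l2_norm (M *\<^sub>v v) \<le> op_norm M" by (rule opn_upper) (use M v True in auto)
  moreover have "M *\<^sub>v v = 0\<^sub>v n" using M v0 by auto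
  ultimately show ?thesis using True by (simp add: vec_l2_norm_def)
next
  case False
  hence pos: "vec_l2_norm v > 0" using vnorm_nonneg[of v] by simp
  define a where "a = complex_of_real (1 / vec_l2_norm v)"
  have ca: "cmod a = 1 / vec_l2_norm v" unfolding a_def using pos by (simp add: norm_divide)
  have "vec_l2_norm (M *\<^sub>v (a \<cdot>\<^sub>v v)) \<le> op_norm M"
    by (rule opn_upper) (use M v pos in \<open>auto simp: vnorm_smult ca\<close>)
  moreover have "M *\<^sub>v (a \<cdot>\<^sub>v v) = a \<cdot>\<^sub>v (M *\<^sub>v v)" using M v by (rule mult_mat_vec)
  ultimately have "vec_l2_norm (M *\<^sub>v v) / vec_l2_norm v \<le> op_norm M" by (simp add: vnorm_smult ca)
  thus ?thesis using pos by (simp add: divide_le_eq mult.commute)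
qed



theorem lemma22:
  fixes A B C Cinv :: "complex mat" and n r :: nat and \<xi> \<epsilon> :: real
  assumes A: "A \<in> carrier_mat n n" and B: "B \<in> carrier_mat n n"
    and C: "C \<in> carrier_mat n n" and Cinv: "Cinv \<in> carrier_mat n n"
    and A01: "\<forall>i<n. \<forall>j<n. A $$ (i, j) \<in> {0, 1}"
    and B01: "\<forall>i<n. \<forall>j<n. B $$ (i, j) \<in> {0, 1}"
    and r: "1 \<le> r" "r \<le> n - 1"
    and supp: "\<forall>i<n. \<forall>j<n. int j - int i \<noteq> int r \<longrightarrow> A $$ (i, j) = 0 \<and> B $$ (i, j) = 0"
    and xi: "\<xi> > 0"
    and inv: "C * Cinv = 1\<^sub>m n" "Cinv * C = 1\<^sub>m n"
    and nC: "op_norm C \<le> \<xi>" and nCinv: "op_norm Cinv \<le> \<xi>"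
    and eps: "\<epsilon> = op_norm (A * C - C * B)"
    and small: "\<epsilon> < 1 / (fact n * \<xi> ^ n)"
  shows "vec_space.rank n A = vec_space.rank n B"
proof -
  have n2: "n \<ge> 2" using r by simp
  define D where "D = A * C - C * B"
  have D: "D \<in> carrier_mat n n" unfolding D_def using A B C by auto
  have nD: "\<And>v. v \<in> carrier_vec n \<Longrightarrow> vec_l2_norm (D *\<^sub>v v) \<le> \<epsilon> * vec_l2_norm v"
    using opn[OF D] eps unfolding D_def by simp
  have epos: "\<epsilon> \<ge> 0"
  proof -
    have "vec_l2_norm (D *\<^sub>v 0\<^sub>v n) \<le> op_norm D" by (rule opn_upper) (use D in \<open>auto simp: vec_l2_norm_def\<close>)
    moreover have "vec_l2_norm (D *\<^sub>v 0\<^sub>v n) \<ge> 0" by (rule vnorm_nonneg)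
    ultimately show ?thesis using eps unfolding D_def by simp
  qed
  have nCv: "\<And>v. v \<in> carrier_vec n \<Longrightarrow> vec_l2_norm (C *\<^sub>v v) \<le> \<xi> * vec_l2_norm v"
    using opn[OF C] mult_right_mono[OF nC vnorm_nonneg] by (meson order.trans)
  have nCiv: "\<And>v. v \<in> carrier_vec n \<Longrightarrow> vec_l2_norm (Cinv *\<^sub>v v) \<le> \<xi> * vec_l2_norm v"
    using opn[OF Cinv] mult_right_mono[OF nCinv vnorm_nonneg] by (meson order.trans)
  have CCi: "\<And>v. v \<in> carrier_vec n \<Longrightarrow> C *\<^sub>v (Cinv *\<^sub>v v) = v"
    using inv(1) C Cinv by (metis assoc_mult_mat_vec one_mult_mat_vec)
  have CiC: "\<And>v. v \<in> carrier_vec n \<Longrightarrow> Cinv *\<^sub>v (C *\<^sub>v v) = v"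
    using inv(2) C Cinv by (metis assoc_mult_mat_vec one_mult_mat_vec)
  have xi1: "\<xi> \<ge> 1"
  proof -
    define e :: "complex vec" where "e = unit_vec n 0"
    have ec: "e \<in> carrier_vec n" unfolding e_def by simp
    have "(\<Sum>i<n. (cmod (e $ i))\<^sup>2) = (\<Sum>i<n. if i = 0 then 1 else 0)"
      by (rule sum.cong) (auto simp: e_def)
    also have "\<dots> = 1" using n2 by simp
    finally have e1: "vec_l2_norm e = 1" unfolding vec_l2_norm_def e_def by simp
    have "1 = vec_l2_norm (C *\<^sub>v (Cinv *\<^sub>v e))" using CCi[OF ec] e1 by simp
    also have "\<dots> \<le> \<xi> * vec_l2_norm (Cinv *\<^sub>v e)" by (rule nCv) (use Cinv ec in simp)
    also have "\<dots> \<le> \<xi> * (\<xi> * 1)" using nCiv[OF ec] e1 xi by (simp add: mult_left_mono)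
    finally have "1 \<le> \<xi> * \<xi>" by simp
    show ?thesis
    proof (rule ccontr)
      assume "\<not> 1 \<le> \<xi>"
      hence "\<xi> * \<xi> < 1 * 1" using xi by (intro mult_strict_mono) auto
      thus False using \<open>1 \<le> \<xi> * \<xi>\<close> by simp
    qed
  qed
  have key: "1 \<le> \<epsilon> * \<xi>" if ne: "vec_space.rank n A \<noteq> vec_space.rank n B"
  proof (cases "vec_space.rank n B < vec_space.rank n A")
    case True
    obtain w where w: "w \<in> carrier_vec n" "w \<noteq> 0\<^sub>v n" "B *\<^sub>v (Cinv *\<^sub>v w) = 0\<^sub>v n"
        "vec_l2_norm (A *\<^sub>v w) = vec_l2_norm w"
      using core[OF A B Cinv A01 _ True, of r] supp by blast
    have pos: "vec_l2_norm w > 0" using w(1,2) vnorm_zero[of w] vnorm_nonneg[of w] by force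
    define u where "u = Cinv *\<^sub>v w"
    have u: "u \<in> carrier_vec n" unfolding u_def using Cinv w by simp
    have "D *\<^sub>v u = A *\<^sub>v (C *\<^sub>v u) - C *\<^sub>v (B *\<^sub>v u)"
      unfolding D_def using A B C u
      by (simp add: minus_mult_distrib_mat_vec[of "A * C" n n "C * B"])
    also have "\<dots> = A *\<^sub>v w - C *\<^sub>v 0\<^sub>v n" unfolding u_def using CCi[OF w(1)] w(3) by simp
    also have "C *\<^sub>v 0\<^sub>v n = 0\<^sub>v n" using C by (intro eq_vecI) (auto simp: scalar_prod_def)
    also have "A *\<^sub>v w - 0\<^sub>v n = A *\<^sub>v w" using A by (intro eq_vecI) auto
    finally have "vec_l2_norm w = vec_l2_norm (D *\<^sub>v u)" using w(4) by simp
    also have "\<dots> \<le> \<epsilon> * vec_l2_norm u" by (rule nD[OF u])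
    also have "\<dots> \<le> \<epsilon> * (\<xi> * vec_l2_norm w)" unfolding u_def
      by (rule mult_left_mono[OF nCiv[OF w(1)] epos])
    finally have "1 * vec_l2_norm w \<le> (\<epsilon> * \<xi>) * vec_l2_norm w" by (simp add: mult.assoc)
    thus ?thesis using pos by (meson mult_le_cancel_right_pos)
  next
    case False
    hence lt: "vec_space.rank n A < vec_space.rank n B" using ne by simp
    obtain w where w: "w \<in> carrier_vec n" "w \<noteq> 0\<^sub>v n" "A *\<^sub>v (C *\<^sub>v w) = 0\<^sub>v n"
        "vec_l2_norm (B *\<^sub>v w) = vec_l2_norm w"
      using core[OF B A C B01 _ lt, of r] supp by blast
    have pos: "vec_l2_norm w > 0" using w(1,2) vnorm_zero[of w] vnorm_nonneg[of w] by force
    have Bw: "B *\<^sub>v w \<in> carrier_vec n" using B w by simp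
    have CBw: "C *\<^sub>v (B *\<^sub>v w) \<in> carrier_vec n" using B C w by simp
    have "D *\<^sub>v w = A *\<^sub>v (C *\<^sub>v w) - C *\<^sub>v (B *\<^sub>v w)"
      unfolding D_def using A B C w
      by (simp add: minus_mult_distrib_mat_vec[of "A * C" n n "C * B"])
    also have "\<dots> = 0\<^sub>v n - C *\<^sub>v (B *\<^sub>v w)" using w(3) by simp
    finally have Dw: "vec_l2_norm (D *\<^sub>v w) = vec_l2_norm (C *\<^sub>v (B *\<^sub>v w))" using vnorm_neg[OF CBw] by simp
    have "vec_l2_norm w = vec_l2_norm (Cinv *\<^sub>v (C *\<^sub>v (B *\<^sub>v w)))" using w(4) CiC[OF Bw] by simp
    also have "\<dots> \<le> \<xi> * vec_l2_norm (C *\<^sub>v (B *\<^sub>v w))" by (rule nCiv[OF CBw])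
    also have "\<dots> = \<xi> * vec_l2_norm (D *\<^sub>v w)" using Dw by simp
    also have "\<dots> \<le> \<xi> * (\<epsilon> * vec_l2_norm w)" using nD[OF w(1)] xi by (simp add: mult_left_mono)
    finally have "1 * vec_l2_norm w \<le> (\<epsilon> * \<xi>) * vec_l2_norm w" by (simp add: mult_ac)
    thus ?thesis using pos by (meson mult_le_cancel_right_pos)
  qed
  show ?thesis
  proof (rule ccontr)
    assume ne: "vec_space.rank n A \<noteq> vec_space.rank n B"
    have "\<xi> \<le> \<xi> ^ n" using xi1 n2 by (simp add: power_increasing[of 1 n \<xi>, simplified])
    moreover have "(1::real) \<le> fact n" by simp
    ultimately have "\<xi> \<le> fact n * \<xi> ^ n" using xi1
      by (metis mult_1 mult_mono' order_trans zero_le_one xi less_imp_le)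
    hence "\<xi> / (fact n * \<xi> ^ n) \<le> 1" using xi by simp
    moreover have "\<epsilon> * \<xi> < 1 / (fact n * \<xi> ^ n) * \<xi>" using mult_strict_right_mono[OF small xi] .
    ultimately show False using key[OF ne] by simp
  qed
qed


end
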